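(* Let $p$ be a prime and $M=\mathbb Z_{p^2}^2$, so $\mathrm{GL}(M)=\mathrm{GL}(2,\mathbb Z_{p^2})$. (i) Let $f=X-a$, $a\in\mathbb Z_p^\times$. Every element of $\mathrm{GL}(M)_f^{(1,1)}$ is conjugate in $\mathrm{GL}(2,\mathbb Z_{p^2})$ to exactly one of the following, where $b$ is an integer with $0<b<p$, $b\equiv a\pmod p$: (i.1) $bI+p\begin{bmatrix}\alpha&0\\0&\delta\end{bmatrix}$ with integers $0\le\alpha\le\delta<p$; (i.2) $bI+p\begin{bmatrix}\alpha&1\\0&\alpha\end{bmatrix}$ with $\alpha\in\mathbb Z_p$; (i.3) $bI+p\begin{bmatrix}0&1\\-b_0&-b_1\end{bmatrix}$ with $X^2+b_1X+b_0\in\mathbb Z_p[X]$ irreducible. (ii) Let $f=X-a$, $a\in\mathbb Z_p^\times$. Every element of $\mathrm{GL}(M)_f^{(2)}$ is conjugate in $\mathrm{GL}(2,\mathbb Z_{p^2})$ to exactly one matrix $\begin{bmatrix}b&1\\0&b\end{bmatrix}+p\begin{bmatrix}\alpha&0\\ \gamma&0\end{bmatrix}$, with $b$ an integer, $0<b<p$, $b\equiv a\pmod p$, and $\alpha,\gamma\in\mathbb Z_p$. (iii) Let $f=X^2+a_1X+a_0\in\mathbb Z_p[X]$ be irreducible. Every element of $\mathrm{GL}(M)_f$ is conjugate in $\mathrm{GL}(2,\mathbb Z_{p^2})$ to exactly one matrix $\begin{bmatrix}0&1\\-b_0&-b_1\end{bmatrix}+p\begin{bmatrix}\alpha&\beta\\0&0\end{bmatrix}$,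 where $b_0,b_1$ are the integers with $0\le b_0,b_1<p$, $b_0\equiv a_0$, $b_1\equiv a_1\pmod p$, and $\alpha,\beta\in\mathbb Z_p$.
   Context: $\mathbb Z_m=\mathbb Z/m\mathbb Z$. For $x=c+p\mathbb Z\in\mathbb Z_p$, $px$ denotes the element $pc+p^2\mathbb Z$ of $\mathbb Z_{p^2}$; integers are regarded as elements of $\mathbb Z_{p^2}$ by reduction. For $A\in\mathrm{GL}(2,\mathbb Z_{p^2})$, $\overline A\in\mathrm{GL}(2,\mathbb Z_p)$ is its entrywise reduction mod $p$. For monic irreducible $f\in\mathbb Z_p[X]$, $f\neq X$: $\mathrm{GL}(M)_f$ is the set of $A$ such that the minimal polynomial of $\overline A$ is a power of $f$. For $f=X-a$: $\mathrm{GL}(M)_f^{(1,1)}$ is the set of $A$ such that $\overline A$ has elementary divisors $f,f$ (i.e. $\overline A=aI$), and $\mathrm{GL}(M)_f^{(2)}$ is the set of $A$ such that $\overline A$ has the single elementary divisor $f^2$. Conjugacy classes correspond to isomorphism classes of $\Lambda$-modules ($\Lambda=\mathbb Z[t,t^{-1}]$) with underlying group $\mathbb Z_{p^2}^2$ and $t$ acting by the matrix. *)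

theory Defs
  imports "HOL-Computational_Algebra.Polynomial" "HOL-Number_Theory.Cong"
begin

text \<open>2x2 matrices over Z/mZ, represented by integer quadruples (a,b,c,d) standing for
  the matrix [[a,b],[c,d]]; canonical representatives have entries in {0..<m}.\<close>

type_synonym mat2 = "int \<times> int \<times> int \<times> int"

definition mred :: "int \<Rightarrow> mat2 \<Rightarrow> mat2" where
  "mred m A = (case A of (a,b,c,d) \<Rightarrow> (a mod m, b mod m, c mod m, d mod m))"

definition mI :: mat2 where "mI = (1,0,0,1)"

definition mzero :: mat2 where "mzero = (0,0,0,0)"

definition madd :: "mat2 \<Rightarrow> mat2 \<Rightarrow> mat2" where
  "madd A B = (case A of (a,b,c,d) \<Rightarrow> case B of (a',b',c',d') \<Rightarrow> (a+a', b+b', c+c', d+d'))"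

definition msmul :: "int \<Rightarrow> mat2 \<Rightarrow> mat2" where
  "msmul s A = (case A of (a,b,c,d) \<Rightarrow> (s*a, s*b, s*c, s*d))"

definition mmul :: "int \<Rightarrow> mat2 \<Rightarrow> mat2 \<Rightarrow> mat2" where
  "mmul m A B = mred m (case A of (a,b,c,d) \<Rightarrow> case B of (a',b',c',d') \<Rightarrow>
     (a*a' + b*c', a*b' + b*d', c*a' + d*c', c*b' + d*d'))"

definition mdet :: "mat2 \<Rightarrow> int" where
  "mdet A = (case A of (a,b,c,d) \<Rightarrow> a*d - b*c)"

definition GL2 :: "int \<Rightarrow> mat2 set" where
  "GL2 m = {A. mred m A = A \<and> coprime (mdet A) m}"

definition conj2 :: "int \<Rightarrow> mat2 \<Rightarrow> mat2 \<Rightarrow> bool" where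
  "conj2 m A B \<longleftrightarrow> (\<exists>P\<in>GL2 m. \<exists>Q\<in>GL2 m.
      mmul m P Q = mred m mI \<and> mmul m Q P = mred m mI \<and> B = mmul m (mmul m P A) Q)"

definition peval :: "int \<Rightarrow> int poly \<Rightarrow> mat2 \<Rightarrow> mat2" where
  "peval m q A = foldr (\<lambda>c acc. mred m (madd (msmul c mI) (mmul m acc A))) (coeffs q) (mred m mzero)"

definition preduce :: "int \<Rightarrow> int poly \<Rightarrow> int poly" where
  "preduce p q = map_poly (\<lambda>c. c mod p) q"

definition minpoly_mod :: "int \<Rightarrow> mat2 \<Rightarrow> int poly \<Rightarrow> bool" where
  "minpoly_mod p A q \<longleftrightarrow> lead_coeff q = 1 \<and> preduce p q = q \<and> peval p q A = mred p mzero \<and>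
     (\<forall>q'. lead_coeff q' = 1 \<longrightarrow> peval p q' A = mred p mzero \<longrightarrow> degree q \<le> degree q')"

definition irreducible_mod :: "int \<Rightarrow> int poly \<Rightarrow> bool" where
  "irreducible_mod p f \<longleftrightarrow> degree (preduce p f) \<ge> 1 \<and>
     (\<forall>g h. preduce p f = preduce p (g * h) \<longrightarrow>
        degree (preduce p g) = 0 \<or> degree (preduce p h) = 0)"

definition GLf :: "int \<Rightarrow> int poly \<Rightarrow> mat2 set" where
  "GLf p f = {A \<in> GL2 (p^2). \<exists>k q. minpoly_mod p (mred p A) q \<and> q = preduce p (f ^ k)}"

text \<open>GL(M)_f^(1,1) for f = X - a: A mod p = aI.\<close>
definition GL11 :: "int \<Rightarrow> int \<Rightarrow> mat2 set" where
  "GL11 p a = {A \<in> GL2 (p^2). mred p A = mred p (msmul a mI)}"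

text \<open>GL(M)_f^(2) for f = X - a: A mod p has single elementary divisor (X-a)^2,
  i.e. (for a 2x2 matrix) its minimal polynomial is (X-a)^2.\<close>
definition GLtwo :: "int \<Rightarrow> int \<Rightarrow> mat2 set" where
  "GLtwo p a = {A \<in> GL2 (p^2). minpoly_mod p (mred p A) (preduce p ([:-a, 1:] ^ 2))}"

definition NF1 :: "int \<Rightarrow> int \<Rightarrow> mat2 set" where
  "NF1 p a =
     {N. \<exists>b \<alpha> \<delta>. 0 < b \<and> b < p \<and> [b = a] (mod p) \<and> 0 \<le> \<alpha> \<and> \<alpha> \<le> \<delta> \<and> \<delta> < p \<and>
          N = mred (p^2) (b + p*\<alpha>, 0, 0, b + p*\<delta>)}
   \<union> {N. \<exists>b \<alpha>. 0 < b \<and> b < p \<and> [b = a] (mod p) \<and> 0 \<le> \<alpha> \<and> \<alpha> < p \<and>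
          N = mred (p^2) (b + p*\<alpha>, p, 0, b + p*\<alpha>)}
   \<union> {N. \<exists>b b0 b1. 0 < b \<and> b < p \<and> [b = a] (mod p) \<and> 0 \<le> b0 \<and> b0 < p \<and> 0 \<le> b1 \<and> b1 < p \<and>
          irreducible_mod p [:b0, b1, 1:] \<and>
          N = mred (p^2) (b, p, - p*b0, b - p*b1)}"

definition NF2 :: "int \<Rightarrow> int \<Rightarrow> mat2 set" where
  "NF2 p a =
     {N. \<exists>b \<alpha> \<gamma>. 0 < b \<and> b < p \<and> [b = a] (mod p) \<and> 0 \<le> \<alpha> \<and> \<alpha> < p \<and> 0 \<le> \<gamma> \<and> \<gamma> < p \<and>
          N = mred (p^2) (b + p*\<alpha>, 1, p*\<gamma>, b)}"

definition NF3 :: "int \<Rightarrow> int \<Rightarrow> int \<Rightarrow> mat2 set" where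
  "NF3 p a0 a1 =
     {N. \<exists>b0 b1 \<alpha> \<beta>. 0 \<le> b0 \<and> b0 < p \<and> 0 \<le> b1 \<and> b1 < p \<and> [b0 = a0] (mod p) \<and> [b1 = a1] (mod p) \<and>
          0 \<le> \<alpha> \<and> \<alpha> < p \<and> 0 \<le> \<beta> \<and> \<beta> < p \<and>
          N = mred (p^2) (p*\<alpha>, 1 + p*\<beta>, - b0, - b1)}"

end

theory Submission imports Defs begin

definition imul :: "mat2 \<Rightarrow> mat2 \<Rightarrow> mat2" where
 "imul A B = (case A of (a,b,c,d) \<Rightarrow> case B of (a',b',c',d') \<Rightarrow>
     (a*a' + b*c', a*b' + b*d', c*a' + d*c', c*b' + d*d'))"
definition mtr :: "mat2 \<Rightarrow> int" where "mtr A = (case A of (a,b,c,d) \<Rightarrow> a+d)"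
definition madj :: "mat2 \<Rightarrow> mat2" where "madj A = (case A of (a,b,c,d) \<Rightarrow> (d,-b,-c,a))"
definition mc :: "int \<Rightarrow> mat2 \<Rightarrow> mat2 \<Rightarrow> bool" where "mc m A B \<longleftrightarrow> mred m A = mred m B"
definition sim :: "int \<Rightarrow> mat2 \<Rightarrow> mat2 \<Rightarrow> bool" where
  "sim m A B \<longleftrightarrow> (\<exists>P. coprime (mdet P) m \<and> mc m (imul P A) (imul B P))"

lemma mmul_eq: "mmul m A B = mred m (imul A B)"
  by (cases A; cases B) (simp add: mmul_def imul_def)

lemma mc_iff: "mc m (a,b,c,d) (a',b',c',d') \<longleftrightarrow> [a=a'] (mod m) \<and> [b=b'] (mod m) \<and> [c=c'] (mod m) \<and> [d=d'] (mod m)"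
  by (simp add: mc_def mred_def cong_def)

lemma mc_refl[simp]: "mc m A A" by (simp add: mc_def)
lemma mc_sym: "mc m A B \<Longrightarrow> mc m B A" by (simp add: mc_def)
lemma mc_trans[trans]: "mc m A B \<Longrightarrow> mc m B C \<Longrightarrow> mc m A C" by (simp add: mc_def)
lemma mred_mred[simp]: "mred m (mred m A) = mred m A"
  by (cases A) (simp add: mred_def)
lemma mc_mred[simp]: "mc m (mred m A) B \<longleftrightarrow> mc m A B" "mc m A (mred m B) \<longleftrightarrow> mc m A B"
  by (simp_all add: mc_def)

lemma mc_imul0: "mc m A A' \<Longrightarrow> mc m B B' \<Longrightarrow> mc m (imul A B) (imul A' B')"
  by (cases A; cases A'; cases B; cases B') (auto simp: mc_iff imul_def intro!: cong_add cong_mult)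

lemma mred_imul[simp]: "mred m (imul (mred m A) B) = mred m (imul A B)" "mred m (imul A (mred m B)) = mred m (imul A B)"
  using mc_imul0[of m "mred m A" A B B] mc_imul0[of m A A "mred m B" B] by (simp_all add: mc_def)

lemma mc_imul: "mc m A A' \<Longrightarrow> mc m B B' \<Longrightarrow> mc m (imul A B) (imul A' B')"
  by (rule mc_imul0)

lemma mc_madd: "mc m A A' \<Longrightarrow> mc m B B' \<Longrightarrow> mc m (madd A B) (madd A' B')"
  by (cases A; cases A'; cases B; cases B') (auto simp: mc_iff madd_def intro!: cong_add)

lemma mc_msmul: "[s = s'] (mod m) \<Longrightarrow> mc m A A' \<Longrightarrow> mc m (msmul s A) (msmul s' A')"
  by (cases A; cases A') (auto simp: mc_iff msmul_def intro!: cong_mult)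

lemma mc_mdet: "mc m A B \<Longrightarrow> [mdet A = mdet B] (mod m)"
  by (cases A; cases B) (auto simp: mc_iff mdet_def intro!: cong_diff cong_mult)

lemma mc_mtr: "mc m A B \<Longrightarrow> [mtr A = mtr B] (mod m)"
  by (cases A; cases B) (auto simp: mc_iff mtr_def intro!: cong_add)

lemma imul_assoc: "imul (imul A B) C = imul A (imul B C)"
  by (cases A; cases B; cases C) (simp add: imul_def algebra_simps)

lemma mdet_imul: "mdet (imul A B) = mdet A * mdet B"
  by (cases A; cases B) (simp add: imul_def mdet_def algebra_simps)

lemma mtr_imul_comm: "mtr (imul A B) = mtr (imul B A)"
  by (cases A; cases B) (simp add: imul_def mtr_def algebra_simps)

lemma madj_left: "imul (madj P) P = msmul (mdet P) mI"
  by (cases P) (simp add: imul_def madj_def mdet_def msmul_def mI_def algebra_simps)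
lemma madj_right: "imul P (madj P) = msmul (mdet P) mI"
  by (cases P) (simp add: imul_def madj_def mdet_def msmul_def mI_def algebra_simps)
lemma mdet_madj[simp]: "mdet (madj P) = mdet P"
  by (cases P) (simp add: madj_def mdet_def algebra_simps)

lemma imul_msmul[simp]: "imul (msmul s A) B = msmul s (imul A B)" "imul A (msmul s B) = msmul s (imul A B)"
  by (cases A; cases B; simp add: imul_def msmul_def algebra_simps)+
lemma imul_mI[simp]: "imul mI A = A" "imul A mI = A"
  by (cases A; simp add: imul_def mI_def)+
lemma msmul_msmul[simp]: "msmul s (msmul t A) = msmul (s*t) A"
  by (cases A; simp add: msmul_def algebra_simps)
lemma mtr_msmul[simp]: "mtr (msmul s A) = s * mtr A"
  by (cases A; simp add: msmul_def mtr_def algebra_simps)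
lemma mdet_msmul[simp]: "mdet (msmul s A) = s*s * mdet A"
  by (cases A; simp add: msmul_def mdet_def algebra_simps)

lemma mc_cancel: assumes "coprime u m" "mc m (msmul u A) (msmul u B)" shows "mc m A B"
  using assms by (cases A; cases B) (simp add: mc_iff msmul_def cong_mult_lcancel)

lemma mc_msmul_mI: "mc m A B \<Longrightarrow> mc m (msmul s A) (msmul s B)"
  by (rule mc_msmul) auto


lemma sim_refl: "sim m A A"
proof -
  have "mdet mI = 1" by (simp add: mdet_def mI_def)
  then show ?thesis unfolding sim_def by (intro exI[of _ mI]) simp
qed


lemma sim_sym: assumes "sim m A B" shows "sim m B A"
proof -
  obtain P where cp: "coprime (mdet P) m" and h: "mc m (imul P A) (imul B P)"
    using assms unfolding sim_def by blast
  have 1: "mc m (imul (madj P) (imul (imul P A) (madj P))) (imul (madj P) (imul (imul B P) (madj P)))"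
    by (rule mc_imul[OF mc_refl mc_imul[OF h mc_refl]])
  have 2: "imul (madj P) (imul (imul P A) (madj P)) = msmul (mdet P) (imul A (madj P))"
    by (cases P; cases A) (simp add: imul_def madj_def mdet_def msmul_def algebra_simps)
  have 3: "imul (madj P) (imul (imul B P) (madj P)) = msmul (mdet P) (imul (madj P) B)"
    by (cases P; cases B) (simp add: imul_def madj_def mdet_def msmul_def algebra_simps)
  have "mc m (imul A (madj P)) (imul (madj P) B)"
    using 1 unfolding 2 3 by (rule mc_cancel[OF cp])
  then have "mc m (imul (madj P) B) (imul A (madj P))" by (rule mc_sym)
  then show ?thesis unfolding sim_def using cp by (intro exI[of _ "madj P"]) simp
qed

lemma msmul_1[simp]: "msmul 1 A = A" by (cases A) (simp add: msmul_def)

lemma sim_trans: assumes "sim m A B" "sim m B C" shows "sim m A C"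
proof -
  obtain P where cp: "coprime (mdet P) m" and h: "mc m (imul P A) (imul B P)"
    using assms unfolding sim_def by blast
  obtain Q where cq: "coprime (mdet Q) m" and h2: "mc m (imul Q B) (imul C Q)"
    using assms unfolding sim_def by blast
  have "imul (imul Q P) A = imul Q (imul P A)" by (simp add: imul_assoc)
  also have "mc m (imul Q (imul P A)) (imul Q (imul B P))" by (rule mc_imul[OF mc_refl h])
  also have "imul Q (imul B P) = imul (imul Q B) P" by (simp add: imul_assoc)
  also have "mc m (imul (imul Q B) P) (imul (imul C Q) P)" by (rule mc_imul[OF h2 mc_refl])
  also have "imul (imul C Q) P = imul C (imul Q P)" by (simp add: imul_assoc)
  finally have "mc m (imul (imul Q P) A) (imul C (imul Q P))" .
  moreover have "coprime (mdet (imul Q P)) m" using cp cq by (simp add: mdet_imul)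
  ultimately show ?thesis unfolding sim_def by blast
qed

lemma sim_mc: assumes "sim m A B" "mc m A A'" "mc m B B'" shows "sim m A' B'"
proof -
  obtain P where cp: "coprime (mdet P) m" and h: "mc m (imul P A) (imul B P)"
    using assms unfolding sim_def by blast
  have "mc m (imul P A') (imul P A)" by (rule mc_imul[OF mc_refl mc_sym[OF assms(2)]])
  also note h
  also have "mc m (imul B P) (imul B' P)" by (rule mc_imul[OF assms(3) mc_refl])
  finally show ?thesis unfolding sim_def using cp by blast
qed

lemma mc_sim: "mc m A B \<Longrightarrow> sim m A B"
  by (rule sim_mc[OF sim_refl mc_refl])

lemma conj2_sim: assumes "conj2 m A B" shows "sim m A B"
proof -
  obtain P Q where P: "P \<in> GL2 m" and Q: "Q \<in> GL2 m" and PQ: "mmul m P Q = mred m mI"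
    and QP: "mmul m Q P = mred m mI" and B: "B = mmul m (mmul m P A) Q"
    using assms unfolding conj2_def by blast
  have QP': "mc m (imul Q P) mI" using QP by (simp add: mmul_eq mc_def)
  have "mc m (imul B P) (imul (imul (imul P A) Q) P)"
    unfolding B mmul_eq by (rule mc_imul[OF _ mc_refl]) (simp add: mc_def)
  also have "imul (imul (imul P A) Q) P = imul (imul P A) (imul Q P)" by (simp add: imul_assoc)
  also have "mc m (imul (imul P A) (imul Q P)) (imul (imul P A) mI)"
    by (rule mc_imul[OF mc_refl QP'])
  finally have "mc m (imul P A) (imul B P)" by (simp add: mc_sym)
  then show ?thesis unfolding sim_def using P by (intro exI[of _ P]) (auto simp: GL2_def)
qed

lemma sim_conj2: assumes "sim m A B" "mred m A = A" "mred m B = B"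
  shows "conj2 m A B"
proof -
  obtain P where cp: "coprime (mdet P) m" and h: "mc m (imul P A) (imul B P)"
    using assms unfolding sim_def by blast
  obtain u where u: "[mdet P * u = 1] (mod m)" using cong_solve_coprime_int[OF cp] by blast
  have cu: "coprime u m"
    using u by (metis coprime_1_left coprime_mult_left_iff cong_imp_coprime cong_sym)
  define P0 where "P0 = mred m P"
  define Q0 where "Q0 = mred m (msmul u (madj P))"
  have mP: "mc m P0 P" and mQ: "mc m Q0 (msmul u (madj P))" by (simp_all add: P0_def Q0_def)
  have P0: "P0 \<in> GL2 m"
    using cong_imp_coprime[OF cong_sym[OF mc_mdet[OF mP]] cp] by (simp add: GL2_def P0_def)
  have "coprime (mdet (msmul u (madj P))) m" using cu cp by simp
  then have Q0: "Q0 \<in> GL2 m"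
    using cong_imp_coprime[OF cong_sym[OF mc_mdet[OF mQ]]] by (simp add: GL2_def Q0_def)
  have uI: "mc m (msmul (mdet P * u) mI) mI"
    using mc_msmul[OF u mc_refl, of mI] by simp
  have e1: "imul P (msmul u (madj P)) = msmul (mdet P * u) mI"
    by (simp add: madj_right mult.commute)
  have e2: "imul (msmul u (madj P)) P = msmul (mdet P * u) mI"
    by (simp add: madj_left mult.commute)
  have "mc m (imul P0 Q0) mI" using mc_trans[OF mc_imul[OF mP mQ]] e1 uI by simp
  then have PQ: "mmul m P0 Q0 = mred m mI" by (simp add: mmul_eq mc_def)
  have "mc m (imul Q0 P0) mI" using mc_trans[OF mc_imul[OF mQ mP]] e2 uI by simp
  then have QP: "mmul m Q0 P0 = mred m mI" by (simp add: mmul_eq mc_def)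
  have "mc m (mmul m (mmul m P0 A) Q0) (imul (imul P A) (msmul u (madj P)))"
    unfolding mmul_eq mc_mred by (rule mc_imul[OF _ mQ]) (simp add: mc_imul[OF mP mc_refl])
  also have "mc m (imul (imul P A) (msmul u (madj P))) (imul (imul B P) (msmul u (madj P)))"
    by (rule mc_imul[OF h mc_refl])
  also have "imul (imul B P) (msmul u (madj P)) = imul B (msmul (mdet P * u) mI)"
    by (simp only: imul_assoc e1)
  also have "mc m (imul B (msmul (mdet P * u) mI)) B"
    using mc_imul[OF mc_refl uI, of B] by simp
  finally have "mc m (mmul m (mmul m P0 A) Q0) B" .
  then have "B = mmul m (mmul m P0 A) Q0" using assms(3) by (simp add: mc_def mmul_eq)
  then show ?thesis unfolding conj2_def using P0 Q0 PQ QP by blast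
qed


lemma sim_inv: assumes "sim m A B" shows "[mtr A = mtr B] (mod m)" "[mdet A = mdet B] (mod m)"
proof -
  obtain P where cp: "coprime (mdet P) m" and h: "mc m (imul P A) (imul B P)"
    using assms unfolding sim_def by blast
  have "[mdet P * mdet A = mdet P * mdet B] (mod m)"
    using mc_mdet[OF h] by (simp add: mdet_imul mult.commute)
  then show "[mdet A = mdet B] (mod m)" using cong_mult_lcancel[OF cp] by blast
  have "mc m (imul (madj P) (imul P A)) (imul (madj P) (imul B P))" by (rule mc_imul[OF mc_refl h])
  from mc_mtr[OF this] have "[mtr (imul (madj P) (imul P A)) = mtr (imul (imul B P) (madj P))] (mod m)"
    by (simp add: mtr_imul_comm)
  moreover have "imul (madj P) (imul P A) = msmul (mdet P) A"
    by (simp add: imul_assoc[symmetric] madj_left)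
  moreover have "imul (imul B P) (madj P) = msmul (mdet P) B"
    by (simp add: imul_assoc madj_right)
  ultimately have "[mdet P * mtr A = mdet P * mtr B] (mod m)" by simp
  then show "[mtr A = mtr B] (mod m)" using cong_mult_lcancel[OF cp] by blast
qed

definition ns :: "int \<Rightarrow> mat2 \<Rightarrow> bool" where
  "ns p A = (case A of (a,b,c,d) \<Rightarrow> \<not> (p dvd b \<and> p dvd c \<and> p dvd (a - d)))"

definition Kc :: "int \<Rightarrow> int \<Rightarrow> mat2" where "Kc t d = (0, -d, 1, t)"

lemma coprime_pk: fixes p x :: int assumes "prime p" "\<not> p dvd x" shows "coprime x (p^k)"
  using prime_imp_power_coprime[OF assms] .

lemma cyclic: assumes p: "prime p" and n: "ns p A" shows "sim (p^k) (Kc (mtr A) (mdet A)) A"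
proof -
  obtain a b c d where A: "A = (a,b,c,d)" by (cases A)
  have key: "\<And>v1 v2. imul (v1, a*v1+b*v2, v2, c*v1+d*v2) (Kc (mtr A) (mdet A)) = imul A (v1, a*v1+b*v2, v2, c*v1+d*v2)"
    by (simp add: A imul_def Kc_def mtr_def mdet_def algebra_simps)
  have dets: "\<And>v1 v2. mdet (v1, a*v1+b*v2, v2, c*v1+d*v2) = v1*(c*v1+d*v2) - (a*v1+b*v2)*v2"
    by (simp add: mdet_def)
  have "\<exists>v1 v2. \<not> p dvd (v1*(c*v1+d*v2) - (a*v1+b*v2)*v2)"
  proof (cases "p dvd c")
    case False then show ?thesis by (intro exI[of _ 1] exI[of _ 0]) simp
  next
    case True
    show ?thesis
    proof (cases "p dvd b")
      case False then show ?thesis by (intro exI[of _ 0] exI[of _ 1]) simp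
    next
      case True2: True
      with True n have nd: "\<not> p dvd (a - d)" by (simp add: ns_def A)
      have "(1*(c*1+d*1) - (a*1+b*1)*1) = (c - b) - (a - d)" by simp
      moreover have "p dvd (c - b)" using True True2 by simp
      show ?thesis
      proof (rule exI[of _ 1], rule exI[of _ 1], rule notI)
        assume h: "p dvd (1*(c*1+d*1) - (a*1+b*1)*1)"
        have "p dvd (c - b) - (1*(c*1+d*1) - (a*1+b*1)*1)"
          using \<open>p dvd (c - b)\<close> h by (rule dvd_diff)
        moreover have "(c - b) - (1*(c*1+d*1) - (a*1+b*1)*1) = a - d" by simp
        ultimately show False using nd by simp
      qed
    qed
  qed
  then obtain v1 v2 where "\<not> p dvd (v1*(c*v1+d*v2) - (a*v1+b*v2)*v2)" by blast
  then have "coprime (mdet (v1, a*v1+b*v2, v2, c*v1+d*v2)) (p^k)"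
    using coprime_pk[OF p] dets by simp
  then show ?thesis unfolding sim_def
    by (intro exI[of _ "(v1, a*v1+b*v2, v2, c*v1+d*v2)"] conjI) (simp_all add: key)
qed

lemma classify: assumes p: "prime p" and "ns p A" "ns p B"
  and "[mtr A = mtr B] (mod p^k)" "[mdet A = mdet B] (mod p^k)"
  shows "sim (p^k) A B"
proof -
  have "mc (p^k) (Kc (mtr A) (mdet A)) (Kc (mtr B) (mdet B))"
    using assms(4,5) by (simp add: Kc_def mc_iff cong_uminus)
  then have "sim (p^k) A (Kc (mtr B) (mdet B))"
    using sim_mc[OF sim_sym[OF cyclic[OF p assms(2)]] mc_refl] by blast
  then show ?thesis using sim_trans cyclic[OF p assms(3)] by blast
qed


lemma mc_scale: assumes "s \<noteq> 0" shows "mc (s*m) (msmul s X) (msmul s Y) \<longleftrightarrow> mc m X Y"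
proof -
  have e: "\<And>x y. [s*x = s*y] (mod s*m) \<longleftrightarrow> [x = y] (mod m)"
    using assms by (simp add: cong_iff_dvd_diff right_diff_distrib[symmetric])
  show ?thesis by (cases X; cases Y) (simp add: mc_iff msmul_def e)
qed

definition L :: "int \<Rightarrow> int \<Rightarrow> mat2 \<Rightarrow> mat2" where
  "L p b C = madd (msmul b mI) (msmul p C)"

lemma imul_L: "imul P (L p b C) = madd (msmul b P) (msmul p (imul P C))"
  "imul (L p b C) P = madd (msmul b P) (msmul p (imul C P))"
  by (cases P; cases C; simp add: L_def imul_def madd_def msmul_def mI_def algebra_simps)+

lemma mc_madd_cancel: "mc m (madd X Y) (madd X Z) \<longleftrightarrow> mc m Y Z"
  by (cases X; cases Y; cases Z) (simp add: mc_iff madd_def cong_add_lcancel)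

lemma lift: assumes "sim p C D" "p \<noteq> 0" shows "sim (p^2) (L p b C) (L p b D)"
proof -
  obtain P where cp: "coprime (mdet P) p" and h: "mc p (imul P C) (imul D P)"
    using assms unfolding sim_def by blast
  have "mc (p*p) (msmul p (imul P C)) (msmul p (imul D P))" using h mc_scale[OF assms(2)] by blast
  then have "mc (p^2) (imul P (L p b C)) (imul (L p b D) P)"
    by (simp add: imul_L mc_madd_cancel power2_eq_square)
  moreover have "coprime (mdet P) (p^2)" using cp by simp
  ultimately show ?thesis unfolding sim_def by blast
qed

lemma unlift: assumes "sim (p^2) (L p b C) (L p b D)" "p \<noteq> 0" shows "sim p C D"
proof -
  obtain P where cp: "coprime (mdet P) (p^2)" and h: "mc (p^2) (imul P (L p b C)) (imul (L p b D) P)"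
    using assms unfolding sim_def by blast
  have "mc (p*p) (msmul p (imul P C)) (msmul p (imul D P))"
    using h by (simp add: imul_L mc_madd_cancel power2_eq_square)
  then have "mc p (imul P C) (imul D P)" using mc_scale[OF assms(2)] by blast
  moreover have "coprime (mdet P) p" using cp by simp
  ultimately show ?thesis unfolding sim_def by blast
qed

lemma scal_iff: "\<not> ns p C \<longleftrightarrow> mc p C (msmul (fst C) mI)"
  by (cases C) (auto simp add: ns_def mc_iff msmul_def mI_def cong_iff_dvd_diff dvd_diff_commute)

lemma sim_scal: assumes "sim p C D" "\<not> ns p D" shows "\<not> ns p C"
proof -
  obtain P where cp: "coprime (mdet P) p" and h: "mc p (imul P C) (imul D P)"
    using assms unfolding sim_def by blast
  define \<delta> where "\<delta> = fst D"
  have D: "mc p D (msmul \<delta> mI)" using assms(2) scal_iff \<delta>_def by blast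
  have "mc p (imul P C) (msmul \<delta> P)" using mc_trans[OF h mc_imul[OF D mc_refl]] by simp
  then have "mc p (imul (madj P) (imul P C)) (imul (madj P) (msmul \<delta> P))" by (rule mc_imul[OF mc_refl])
  moreover have "imul (madj P) (imul P C) = msmul (mdet P) C" by (simp add: imul_assoc[symmetric] madj_left)
  moreover have "imul (madj P) (msmul \<delta> P) = msmul (mdet P) (msmul \<delta> mI)" by (simp add: madj_left mult.commute)
  ultimately have "mc p C (msmul \<delta> mI)" using mc_cancel[OF cp] by simp
  then show ?thesis
  proof (cases C)
    case (fields c1 c2 c3 c4)
    assume "mc p C (msmul \<delta> mI)"
    then have "p dvd c1 - \<delta>" "p dvd c4 - \<delta>" "p dvd c2" "p dvd c3"
      by (simp_all add: fields mc_iff msmul_def mI_def cong_iff_dvd_diff)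
    moreover have "p dvd (c1 - \<delta>) - (c4 - \<delta>)" using calculation(1,2) by (rule dvd_diff)
    ultimately show ?thesis by (simp add: fields ns_def)
  qed
qed



subsection \<open>Polynomials mod p\<close>

lemma preduce_coeff: "coeff (preduce p q) n = coeff q n mod p"
  by (simp add: preduce_def coeff_map_poly)

lemma preduce_quad: "preduce p [:a,b,c:] = [:a mod p, b mod p, c mod p:]"
  by (auto simp: poly_eq_iff preduce_coeff coeff_pCons split: nat.split)

lemma preduce_lin: "preduce p [:a,b:] = [:a mod p, b mod p:]"
  by (auto simp: poly_eq_iff preduce_coeff coeff_pCons split: nat.split)

lemma preduce_decomp: "q = preduce p q + smult p (map_poly (\<lambda>c. c div p) q)"
  by (simp add: poly_eq_iff preduce_coeff coeff_map_poly)

lemma preduce_add_smult: "preduce p (a + smult p b) = preduce p a"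
  by (simp add: poly_eq_iff preduce_coeff)

lemma preduce_mult: "preduce p (g*h) = preduce p (preduce p g * preduce p h)"
proof -
  define g1 g2 h1 h2 where "g1 = preduce p g" "g2 = map_poly (\<lambda>c. c div p) g"
    "h1 = preduce p h" "h2 = map_poly (\<lambda>c. c div p) h"
  have g: "g = g1 + smult p g2" and h: "h = h1 + smult p h2"
    using preduce_decomp unfolding g1_g2_h1_h2_def by blast+
  have "g*h = g1*h1 + smult p (g1*h2 + g2*h1 + smult p (g2*h2))"
    unfolding g h by (simp add: algebra_simps smult_add_right)
  then show ?thesis by (simp add: preduce_add_smult g1_g2_h1_h2_def)
qed

lemma poly_preduce: "[poly (preduce p q) x = poly q x] (mod p)"
proof -
  have "poly q x = poly (preduce p q) x + p * poly (map_poly (\<lambda>c. c div p) q) x"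
    by (subst preduce_decomp[of q p]) simp
  then show ?thesis by (simp add: cong_iff_lin)
qed

lemma degree_preduce_ge: assumes "coeff q n mod p \<noteq> 0" shows "n \<le> degree (preduce p q)"
  by (rule le_degree) (simp add: preduce_coeff assms)

lemma degree_preduce_le: "degree (preduce p q) \<le> degree q"
  by (rule degree_le) (simp add: preduce_coeff coeff_eq_0)

lemma root_reducible: fixes p :: int
  assumes p: "prime p" and r: "p dvd (r*r + b1*r + b0)"
  shows "\<not> irreducible_mod p [:b0,b1,1:]"
proof
  assume irr: "irreducible_mod p [:b0,b1,1:]"
  have p1: "p > 1" using prime_gt_1_int[OF p] .
  have gh: "[:-r,1:] * [:r+b1,1:] = [:-(r*(r+b1)), b1, 1:]" by (simp add: algebra_simps)
  have "[b0 = -(r*(r+b1))] (mod p)"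
    using r by (simp add: cong_iff_dvd_diff algebra_simps)
  then have eq: "preduce p [:b0,b1,1:] = preduce p ([:-r,1:] * [:r+b1,1:])"
    unfolding gh preduce_quad by (simp add: cong_def)
  have "\<forall>g h. preduce p [:b0,b1,1:] = preduce p (g * h) \<longrightarrow>
        degree (preduce p g) = 0 \<or> degree (preduce p h) = 0"
    using irr unfolding irreducible_mod_def by (rule conjunct2)
  from this[rule_format, OF eq]
  have "degree (preduce p [:-r,1:]) = 0 \<or> degree (preduce p [:r+b1,1:]) = 0" .
  moreover have "1 \<le> degree (preduce p [:-r,1:])" "1 \<le> degree (preduce p [:r+b1,1:])"
    using p1 by (auto intro!: degree_preduce_ge)
  ultimately show False by simp
qed


lemma small_dvd: fixes x p :: int shows "0 \<le> x \<Longrightarrow> x < p \<Longrightarrow> p dvd x \<Longrightarrow> x = 0"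
  by (metis dvd_imp_mod_0 mod_pos_pos_trivial)

lemma lc_preduce: fixes p :: int assumes p: "prime p" and "preduce p g \<noteq> 0"
  shows "\<not> p dvd lead_coeff (preduce p g)"
proof
  assume d: "p dvd lead_coeff (preduce p g)"
  have p0: "p > 0" using prime_gt_1_int[OF p] by simp
  have e: "lead_coeff (preduce p g) = coeff g (degree (preduce p g)) mod p" by (simp add: preduce_coeff)
  have "lead_coeff (preduce p g) = 0"
    using small_dvd[OF _ _ d] p0 unfolding e by simp
  then show False using assms(2) by simp
qed

lemma noroot_irr: fixes p :: int
  assumes p: "prime p" and nr: "\<forall>x. \<not> p dvd (x*x + b1*x + b0)"
  shows "irreducible_mod p [:b0,b1,1:]"
proof -
  have p1: "p > 1" using prime_gt_1_int[OF p] .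
  have deg2: "2 \<le> degree (preduce p [:b0,b1,1:])" by (rule degree_preduce_ge) (simp add: p1 numeral_2_eq_2)
  have degle: "degree (preduce p [:b0,b1,1:]) \<le> 2"
    using degree_preduce_le[of p "[:b0,b1,1:]"] by simp
  have main: False if eq: "preduce p [:b0,b1,1:] = preduce p (g*h)"
    and dg: "degree (preduce p g) \<noteq> 0" and dh: "degree (preduce p h) \<noteq> 0" for g h
  proof -
    define g' h' where "g' = preduce p g" "h' = preduce p h"
    have g'0: "g' \<noteq> 0" and h'0: "h' \<noteq> 0" using dg dh g'_h'_def by auto
    have lg: "\<not> p dvd lead_coeff g'" and lh: "\<not> p dvd lead_coeff h'"
      using lc_preduce[OF p] g'0 h'0 g'_h'_def by auto
    have "\<not> p dvd lead_coeff g' * lead_coeff h'" using lg lh prime_dvd_mult_iff[OF p] by blast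
    moreover have "coeff (g'*h') (degree g' + degree h') = lead_coeff g' * lead_coeff h'"
      by (rule coeff_mult_degree_sum)
    ultimately have "degree g' + degree h' \<le> degree (preduce p (g'*h'))"
      by (intro degree_preduce_ge) (simp add: dvd_eq_mod_eq_0)
    also have "preduce p (g'*h') = preduce p [:b0,b1,1:]"
      using eq preduce_mult g'_h'_def by metis
    finally have dsum: "degree g' + degree h' \<le> 2" using degle by linarith
    then have d1: "degree g' = 1" using dg dh g'_h'_def by simp
    define u v where "u = coeff g' 1" "v = coeff g' 0"
    have nu: "\<not> p dvd u" using lg d1 u_v_def by simp
    have g'e: "g' = [:v,u:]"
      using d1 by (auto simp: poly_eq_iff u_v_def coeff_pCons coeff_eq_0 split: nat.split)
    have "coprime p u" by (rule prime_imp_coprime) (use p nu in auto)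
    then obtain w where w: "[u*w = 1] (mod p)" using cong_solve_coprime_int by (metis coprime_commute)
    define x where "x = -v*w"
    have "p dvd (1 - u*w)" using w by (simp add: cong_iff_dvd_diff dvd_diff_commute)
    then have "p dvd v*(1 - u*w)" by simp
    moreover have "poly g' x = v*(1 - u*w)" by (simp add: g'e x_def algebra_simps)
    ultimately have g'x: "[poly g' x = 0] (mod p)" by (simp add: cong_0_iff)
    have "[poly g x = poly g' x] (mod p)" unfolding g'_h'_def by (rule cong_sym[OF poly_preduce])
    from cong_trans[OF this g'x] have pg: "[poly g x = 0] (mod p)" .
    have "[poly [:b0,b1,1:] x = poly (preduce p [:b0,b1,1:]) x] (mod p)"
      by (rule cong_sym[OF poly_preduce])
    also have "poly (preduce p [:b0,b1,1:]) x = poly (preduce p (g*h)) x" using eq by simp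
    also have "[poly (preduce p (g*h)) x = poly (g*h) x] (mod p)" by (rule poly_preduce)
    also have "poly (g*h) x = poly g x * poly h x" by simp
    also have "[poly g x * poly h x = 0 * poly h x] (mod p)" by (intro cong_mult pg cong_refl)
    finally have "p dvd poly [:b0,b1,1:] x" by (simp add: cong_0_iff)
    then have "p dvd (x*x + b1*x + b0)" by (simp add: algebra_simps)
    with nr show False by blast
  qed
  show ?thesis unfolding irreducible_mod_def using deg2 main by fastforce
qed


lemma mred_madd[simp]: "mred m (madd (mred m A) B) = mred m (madd A B)" "mred m (madd A (mred m B)) = mred m (madd A B)"
  using mc_madd[of m "mred m A" A B B] mc_madd[of m A A "mred m B" B] by (simp_all add: mc_def)

lemma imul_mzero[simp]: "imul mzero A = mzero" by (cases A) (simp add: imul_def mzero_def)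
lemma madd_mzero[simp]: "madd A mzero = A" by (cases A) (simp add: madd_def mzero_def)

lemma peval_one: "peval m 1 A = mred m mI"
proof -
  have "peval m 1 A = mred m (madd (msmul 1 mI) (mmul m (mred m mzero) A))"
    by (simp add: peval_def)
  also have "\<dots> = mred m mI" by (simp add: mmul_eq)
  finally show ?thesis .
qed

lemma peval_lin: "peval m [:c0,1:] A = mred m (madd (msmul c0 mI) A)"
proof -
  have "peval m [:c0,1:] A = mred m (madd (msmul c0 mI) (mmul m (mred m (madd (msmul 1 mI) (mmul m (mred m mzero) A))) A))"
    by (simp add: peval_def)
  also have "\<dots> = mred m (madd (msmul c0 mI) A)" by (simp add: mmul_eq)
  finally show ?thesis .
qed

lemma imul_madd[simp]: "imul (madd X Y) Z = madd (imul X Z) (imul Y Z)"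
  by (cases X; cases Y; cases Z) (simp add: imul_def madd_def algebra_simps)

lemma peval_quad: "peval m [:c0,c1,1:] A = mred m (madd (msmul c0 mI) (madd (msmul c1 A) (imul A A)))"
proof -
  have "peval m [:c0,c1,1:] A = mred m (madd (msmul c0 mI) (mmul m (mred m (madd (msmul c1 mI) (mmul m (mred m (madd (msmul 1 mI) (mmul m (mred m mzero) A))) A))) A))"
    by (simp add: peval_def)
  also have "\<dots> = mred m (madd (msmul c0 mI) (madd (msmul c1 A) (imul A A)))" by (simp add: mmul_eq)
  finally show ?thesis .
qed


lemma lin_dep: fixes p :: int assumes p: "prime p" and n: "ns p A"
  and h: "mc p (madd (msmul x mI) (msmul y A)) mzero"
  shows "p dvd y \<and> p dvd x"
proof -
  obtain a b c d where A: "A = (a,b,c,d)" by (cases A)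
  have e: "p dvd x + y*a" "p dvd y*b" "p dvd y*c" "p dvd x + y*d"
    using h by (simp_all add: A mc_iff madd_def msmul_def mI_def mzero_def cong_0_iff)
  have py: "p dvd y"
  proof (rule ccontr)
    assume ny: "\<not> p dvd y"
    have "p dvd b" "p dvd c" using e(2,3) ny prime_dvd_mult_iff[OF p] by blast+
    moreover have "p dvd (x + y*a) - (x + y*d)" using e(1,4) by (rule dvd_diff)
    then have "p dvd y*(a - d)" by (simp add: algebra_simps)
    then have "p dvd a - d" using ny prime_dvd_mult_iff[OF p] by blast
    ultimately show False using n by (simp add: A ns_def)
  qed
  moreover have "p dvd (x + y*a) - y*a" using e(1) py by (intro dvd_diff) auto
  ultimately show ?thesis by simp
qed

lemma ns_mred[simp]: "ns p (mred p A) \<longleftrightarrow> ns p A"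
proof -
  have e: "\<And>u v. p dvd (u mod p - v mod p) \<longleftrightarrow> p dvd (u - v)"
    by (metis cong_iff_dvd_diff cong_def mod_mod_trivial)
  show ?thesis by (cases A) (simp add: ns_def mred_def e dvd_mod_iff)
qed

lemma minpoly_ns: fixes p :: int assumes "minpoly_mod p (mred p A) q" "degree q = 2"
  shows "ns p A"
proof (rule ccontr)
  assume "\<not> ns p A"
  then have sc: "mc p A (msmul (fst A) mI)" using scal_iff by blast
  have "peval p [:-(fst A), 1:] (mred p A) = mred p (madd (msmul (-(fst A)) mI) (mred p A))"
    by (rule peval_lin)
  also have "\<dots> = mred p (madd (msmul (-(fst A)) mI) (msmul (fst A) mI))"
    using mc_madd[OF mc_refl sc, of "msmul (-(fst A)) mI"] by (simp add: mc_def)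
  also have "madd (msmul (-(fst A)) mI) (msmul (fst A) mI) = mzero"
    by (simp add: madd_def msmul_def mI_def mzero_def)
  finally have ev: "peval p [:-(fst A), 1:] (mred p A) = mred p mzero" .
  have lc: "lead_coeff [:-(fst A), 1:] = 1" by simp
  have "degree q \<le> degree [:-(fst A), 1:]" using assms(1) ev lc unfolding minpoly_mod_def by blast
  then show False using assms(2) by simp
qed

lemma minpoly_quad: fixes p :: int assumes p: "prime p" and m: "minpoly_mod p (mred p A) [:c0,c1,1:]"
  shows "ns p A \<and> [mtr A = -c1] (mod p) \<and> [mdet A = c0] (mod p)"
proof -
  have n: "ns p A" using minpoly_ns[OF m] by simp
  define B where "B = mred p A"
  have BA: "mc p B A" by (simp add: B_def)
  have "peval p [:c0,c1,1:] B = mred p mzero" using m unfolding minpoly_mod_def B_def by blast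
  then have "mc p (madd (msmul c0 mI) (madd (msmul c1 B) (imul B B))) mzero"
    by (simp add: peval_quad mc_def)
  moreover have "madd (msmul c0 mI) (madd (msmul c1 B) (imul B B)) =
       madd (msmul (c0 - mdet B) mI) (msmul (c1 + mtr B) B)"
    by (cases B) (simp add: madd_def msmul_def mI_def imul_def mtr_def mdet_def algebra_simps)
  ultimately have "mc p (madd (msmul (c0 - mdet B) mI) (msmul (c1 + mtr B) B)) mzero" by simp
  moreover have nB: "ns p B" using n by (simp add: B_def)
  ultimately have "p dvd (c1 + mtr B) \<and> p dvd (c0 - mdet B)"
    using lin_dep[OF p] by blast
  moreover have "[mtr B = mtr A] (mod p)" "[mdet B = mdet A] (mod p)" using mc_mtr[OF BA] mc_mdet[OF BA] by auto
  ultimately have h1: "p dvd (c1 + mtr B)" and h2: "p dvd (c0 - mdet B)"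
    and h3: "p dvd mtr B - mtr A" and h4: "p dvd mdet B - mdet A" by (auto simp: cong_iff_dvd_diff)
  have "p dvd (c1 + mtr B) - (mtr B - mtr A)" using h1 h3 by (rule dvd_diff)
  moreover have "(c1 + mtr B) - (mtr B - mtr A) = mtr A - (-c1)" by simp
  moreover have "p dvd (mdet B - mdet A) + (c0 - mdet B)" using h4 h2 by (rule dvd_add)
  moreover have "(mdet B - mdet A) + (c0 - mdet B) = -(mdet A - c0)" by simp
  ultimately show ?thesis using n by (simp add: cong_iff_dvd_diff dvd_diff_commute)
qed


lemma exu_from: assumes "N \<in> S" "conj2 m A N"
  and "\<And>N1 N2. N1 \<in> S \<Longrightarrow> N2 \<in> S \<Longrightarrow> sim m N1 N2 \<Longrightarrow> N1 = N2"
  shows "\<exists>!N. N \<in> S \<and> conj2 m A N"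
proof (rule ex1I[of _ N])
  show "N \<in> S \<and> conj2 m A N" using assms by blast
  fix N' assume "N' \<in> S \<and> conj2 m A N'"
  then show "N' = N" using assms(3)[of N' N] assms(1,2) sim_trans[OF sim_sym[OF conj2_sim] conj2_sim] by blast
qed

lemma pdiv: fixes p s :: int assumes "p dvd s" shows "[p * ((s div p) mod p) = s] (mod p^2)"
proof -
  obtain t where s: "s = p * t" using assms by blast
  show ?thesis
  proof (cases "p = 0")
    case True then show ?thesis using s by simp
  next
    case False
    have st: "s div p = t" using False s by simp
    have e: "p * (t mod p) = (p*t) mod (p*p)" by (rule mult_mod_right)
    have "(p * (t mod p)) mod (p*p) = (p*t) mod (p*p)" unfolding e by (rule mod_mod_trivial)
    then show ?thesis using st unfolding cong_def power2_eq_square s by simp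
  qed
qed

lemma pp_cancel: fixes p x y :: int assumes "p \<noteq> 0" "[p*x = p*y] (mod p^2)" shows "[x = y] (mod p)"
proof -
  have "p*p dvd p*x - p*y" using assms(2) unfolding cong_iff_dvd_diff power2_eq_square .
  then have "p*p dvd p*(x - y)" by (simp only: right_diff_distrib)
  then have "p dvd (x - y)" using assms(1) dvd_times_left_cancel_iff by blast
  then show ?thesis by (simp add: cong_iff_dvd_diff)
qed

lemma range_eq: fixes p x y :: int shows "[x = y] (mod p) \<Longrightarrow> 0 \<le> x \<Longrightarrow> x < p \<Longrightarrow> 0 \<le> y \<Longrightarrow> y < p \<Longrightarrow> x = y"
  using cong_less_imp_eq_int by blast

lemma mred_canon: "mred m (mred m A) = mred m A" by simp

subsection \<open>Part (ii)\<close>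

lemma part2_unique: fixes p a :: int assumes p: "prime p"
  shows "N1 \<in> NF2 p a \<Longrightarrow> N2 \<in> NF2 p a \<Longrightarrow> sim (p^2) N1 N2 \<Longrightarrow> N1 = N2"
proof -
  assume h1: "N1 \<in> NF2 p a" and h2: "N2 \<in> NF2 p a" and s: "sim (p^2) N1 N2"
  obtain b1 \<alpha>1 \<gamma>1 where
    r1: "0 < b1" "b1 < p" "[b1 = a] (mod p)" "0 \<le> \<alpha>1" "\<alpha>1 < p" "0 \<le> \<gamma>1" "\<gamma>1 < p"
    and N1: "N1 = mred (p^2) (b1 + p*\<alpha>1, 1, p*\<gamma>1, b1)"
    using h1 unfolding NF2_def by (auto simp only: mem_Collect_eq)
  obtain b2 \<alpha>2 \<gamma>2 where
    r2: "0 < b2" "b2 < p" "[b2 = a] (mod p)" "0 \<le> \<alpha>2" "\<alpha>2 < p" "0 \<le> \<gamma>2" "\<gamma>2 < p"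
    and N2: "N2 = mred (p^2) (b2 + p*\<alpha>2, 1, p*\<gamma>2, b2)"
    using h2 unfolding NF2_def by (auto simp only: mem_Collect_eq)
  have p0: "p \<noteq> 0" using p by auto
  have b: "b1 = b2" using r1 r2 by (intro range_eq[of _ _ p]) (auto intro: cong_trans cong_sym)
  have s': "sim (p^2) (b1 + p*\<alpha>1, 1, p*\<gamma>1, b1) (b2 + p*\<alpha>2, 1, p*\<gamma>2, b2)"
    using sim_mc[OF s] N1 N2 by simp
  have "[b1 + p*\<alpha>1 + b1 = b2 + p*\<alpha>2 + b2] (mod p^2)" using sim_inv(1)[OF s'] by (simp add: mtr_def)
  then have "[p*\<alpha>1 = p*\<alpha>2] (mod p^2)" using b by (simp add: cong_iff_dvd_diff algebra_simps)
  then have a: "\<alpha>1 = \<alpha>2" using r1 r2 pp_cancel[OF p0] range_eq by blast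
  have "[(b1 + p*\<alpha>1)*b1 - p*\<gamma>1 = (b2 + p*\<alpha>2)*b2 - p*\<gamma>2] (mod p^2)"
    using sim_inv(2)[OF s'] by (simp add: mdet_def)
  then have "[p*\<gamma>2 = p*\<gamma>1] (mod p^2)" using a b by (simp add: cong_iff_dvd_diff algebra_simps)
  then have g: "\<gamma>2 = \<gamma>1" using r1 r2 pp_cancel[OF p0] range_eq by blast
  show "N1 = N2" using N1 N2 a b g by simp
qed

lemma part2: fixes p a :: int assumes p: "prime p" and na: "\<not> p dvd a" and A: "A \<in> GLtwo p a"
  shows "\<exists>!N. N \<in> NF2 p a \<and> conj2 (p^2) A N"
proof -
  have p1: "p > 1" using prime_gt_1_int[OF p] .
  have AG: "mred (p^2) A = A" and mp: "minpoly_mod p (mred p A) (preduce p ([:-a,1:]^2))"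
    using A by (auto simp: GLtwo_def GL2_def)
  have "[:-a,1:]^2 = [:a*a, -2*a, 1:]" by (simp add: power2_eq_square algebra_simps)
  then have "preduce p ([:-a,1:]^2) = [:(a*a) mod p, (-2*a) mod p, 1:]" using p1 by (simp add: preduce_quad)
  then have mq: "minpoly_mod p (mred p A) [:(a*a) mod p, (-2*a) mod p, 1:]" using mp by simp
  have "ns p A \<and> [mtr A = -((-2*a) mod p)] (mod p) \<and> [mdet A = (a*a) mod p] (mod p)"
    by (rule minpoly_quad[OF p mq])
  then have nA: "ns p A" and trA0: "[mtr A = -((-2*a) mod p)] (mod p)"
    and detA0: "[mdet A = (a*a) mod p] (mod p)" by auto
  have "[-((-2*a) mod p) = -(-2*a)] (mod p)" by (intro cong_uminus) (simp add: cong_def)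
  then have trA: "[mtr A = 2*a] (mod p)" using cong_trans[OF trA0] by simp
  have detA: "[mdet A = a*a] (mod p)" using cong_trans[OF detA0] by (simp add: cong_def)
  define b where "b = a mod p"
  have b0: "0 \<le> b" "b < p" using p1 by (simp_all add: b_def)
  have bn0: "b \<noteq> 0" using na by (simp add: b_def dvd_eq_mod_eq_0)
  have ba: "[b = a] (mod p)" by (simp add: b_def cong_def)
  have "[mtr A = 2*b] (mod p)" using cong_trans[OF trA cong_mult[OF cong_refl cong_sym[OF ba]]] .
  then have d1: "p dvd mtr A - 2*b" by (simp add: cong_iff_dvd_diff)
  define \<alpha> where "\<alpha> = ((mtr A - 2*b) div p) mod p"
  have pa: "[p*\<alpha> = mtr A - 2*b] (mod p^2)" unfolding \<alpha>_def by (rule pdiv[OF d1])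
  have "[mdet A = b*b] (mod p)" using cong_trans[OF detA cong_mult[OF cong_sym[OF ba] cong_sym[OF ba]]] .
  then have "p dvd (b*b - mdet A) + p*\<alpha>*b" by (simp add: cong_iff_dvd_diff dvd_diff_commute)
  then have d2: "p dvd b*b + p*\<alpha>*b - mdet A" by (simp add: algebra_simps)
  define \<gamma> where "\<gamma> = ((b*b + p*\<alpha>*b - mdet A) div p) mod p"
  have pg: "[p*\<gamma> = b*b + p*\<alpha>*b - mdet A] (mod p^2)" unfolding \<gamma>_def by (rule pdiv[OF d2])
  define X :: mat2 where "X = (b + p*\<alpha>, 1, p*\<gamma>, b)"
  have n1: "\<not> p dvd 1" using p1 by (auto dest: zdvd_imp_le)
  have nX: "ns p X" using n1 by (simp add: X_def ns_def)
  have "[b + b + p*\<alpha> = b + b + (mtr A - 2*b)] (mod p^2)" by (rule cong_add[OF cong_refl pa])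
  then have t: "[mtr X = mtr A] (mod p^2)" by (simp add: X_def mtr_def algebra_simps)
  have "[b*b + p*\<alpha>*b - p*\<gamma> = b*b + p*\<alpha>*b - (b*b + p*\<alpha>*b - mdet A)] (mod p^2)"
    by (rule cong_diff[OF cong_refl pg])
  then have d: "[mdet X = mdet A] (mod p^2)" by (simp add: X_def mdet_def algebra_simps)
  have "sim (p^2) X A" using classify[OF p nX nA t d] .
  then have "sim (p^2) A (mred (p^2) X)" by (rule sim_mc[OF sim_sym]) simp_all
  then have c: "conj2 (p^2) A (mred (p^2) X)" by (rule sim_conj2) (simp_all add: AG)
  have "\<alpha> \<ge> 0" "\<alpha> < p" "\<gamma> \<ge> 0" "\<gamma> < p" using p1 by (simp_all add: \<alpha>_def \<gamma>_def)
  then have "mred (p^2) X \<in> NF2 p a" unfolding NF2_def X_def mem_Collect_eq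
    using b0 bn0 ba by (intro exI[of _ b] exI[of _ \<alpha>] exI[of _ \<gamma>]) simp
  then show ?thesis by (rule exu_from[OF _ c part2_unique[OF p]])
qed


subsection \<open>Part (iii)\<close>

lemma irr_a0: fixes p :: int assumes p: "prime p" and irr: "irreducible_mod p [:a0,a1,1:]"
  shows "\<not> p dvd a0"
  using root_reducible[OF p, of 0 a1 a0] irr by auto

lemma part3_unique: fixes p a0 a1 :: int assumes p: "prime p" and irr: "irreducible_mod p [:a0,a1,1:]"
  shows "N1 \<in> NF3 p a0 a1 \<Longrightarrow> N2 \<in> NF3 p a0 a1 \<Longrightarrow> sim (p^2) N1 N2 \<Longrightarrow> N1 = N2"
proof -
  assume h1: "N1 \<in> NF3 p a0 a1" and h2: "N2 \<in> NF3 p a0 a1" and s: "sim (p^2) N1 N2"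
  obtain c0 c1 \<alpha>1 \<beta>1 where
    r1: "0 \<le> c0" "c0 < p" "0 \<le> c1" "c1 < p" "[c0 = a0] (mod p)" "[c1 = a1] (mod p)"
      "0 \<le> \<alpha>1" "\<alpha>1 < p" "0 \<le> \<beta>1" "\<beta>1 < p"
    and N1: "N1 = mred (p^2) (p*\<alpha>1, 1 + p*\<beta>1, - c0, - c1)"
    using h1 unfolding NF3_def by (auto simp only: mem_Collect_eq)
  obtain d0 d1 \<alpha>2 \<beta>2 where
    r2: "0 \<le> d0" "d0 < p" "0 \<le> d1" "d1 < p" "[d0 = a0] (mod p)" "[d1 = a1] (mod p)"
      "0 \<le> \<alpha>2" "\<alpha>2 < p" "0 \<le> \<beta>2" "\<beta>2 < p"
    and N2: "N2 = mred (p^2) (p*\<alpha>2, 1 + p*\<beta>2, - d0, - d1)"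
    using h2 unfolding NF3_def by (auto simp only: mem_Collect_eq)
  have p0: "p \<noteq> 0" using p by auto
  have e0: "c0 = d0" using r1 r2 by (intro range_eq[of _ _ p]) (auto intro: cong_trans cong_sym)
  have e1: "c1 = d1" using r1 r2 by (intro range_eq[of _ _ p]) (auto intro: cong_trans cong_sym)
  have nc0: "\<not> p dvd c0"
  proof
    assume "p dvd c0"
    then have "[a0 = 0] (mod p)" using r1(5) by (metis cong_0_iff cong_sym cong_trans)
    then show False using irr_a0[OF p irr] by (simp add: cong_0_iff)
  qed
  have s': "sim (p^2) (p*\<alpha>1, 1 + p*\<beta>1, - c0, - c1) (p*\<alpha>2, 1 + p*\<beta>2, - d0, - d1)"
    using sim_mc[OF s] N1 N2 by simp
  have "[p*\<alpha>1 + - c1 = p*\<alpha>2 + - d1] (mod p^2)" using sim_inv(1)[OF s'] by (simp add: mtr_def)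
  then have "[p*\<alpha>1 = p*\<alpha>2] (mod p^2)" using e1 by (simp add: cong_iff_dvd_diff algebra_simps)
  then have a: "\<alpha>1 = \<alpha>2" using r1 r2 pp_cancel[OF p0] range_eq by blast
  have "[p*\<alpha>1 * (- c1) - (1 + p*\<beta>1) * (- c0) = p*\<alpha>2 * (- d1) - (1 + p*\<beta>2) * (- d0)] (mod p^2)"
    using sim_inv(2)[OF s'] by (simp add: mdet_def)
  then have "[p*(\<beta>1*c0) = p*(\<beta>2*c0)] (mod p^2)" using a e0 e1 by (simp add: cong_iff_dvd_diff algebra_simps)
  then have "[\<beta>1*c0 = \<beta>2*c0] (mod p)" using pp_cancel[OF p0] by blast
  moreover have "coprime c0 p" using prime_imp_coprime[OF p nc0] by (simp add: coprime_commute)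
  ultimately have "[\<beta>1 = \<beta>2] (mod p)" using cong_mult_rcancel by blast
  then have b: "\<beta>1 = \<beta>2" using r1 r2 range_eq by blast
  show "N1 = N2" using N1 N2 a b e0 e1 by simp
qed

lemma scale_up: fixes p x y :: int shows "[x = y] (mod p) \<Longrightarrow> [p*x = p*y] (mod p^2)"
  by (simp add: cong_iff_dvd_diff power2_eq_square right_diff_distrib[symmetric])

lemma preduce_1: fixes p :: int shows "p > 1 \<Longrightarrow> preduce p 1 = 1"
  by (auto simp: poly_eq_iff preduce_coeff coeff_1)

lemma part3: fixes p a0 a1 :: int assumes p: "prime p" and irr: "irreducible_mod p [:a0,a1,1:]"
  and A: "A \<in> GLf p [:a0,a1,1:]"
  shows "\<exists>!N. N \<in> NF3 p a0 a1 \<and> conj2 (p^2) A N"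
proof -
  define f where "f = [:a0,a1,1:]"
  have p1: "p > 1" using prime_gt_1_int[OF p] .
  have AG: "mred (p^2) A = A" using A by (auto simp: GLf_def GL2_def)
  obtain k where mp: "minpoly_mod p (mred p A) (preduce p (f^k))"
    using A unfolding GLf_def f_def by blast
  have f0: "f \<noteq> 0" and df: "degree f = 2" and lf: "lead_coeff f = 1" by (simp_all add: f_def)
  have dfk: "degree (f^k) = 2*k" using degree_power_eq[OF f0, of k] df by simp
  have lfk: "lead_coeff (f^k) = 1" using lead_coeff_power[of f k] lf by simp
  have dq: "degree (preduce p (f^k)) = 2*k"
  proof (rule antisym)
    show "degree (preduce p (f^k)) \<le> 2*k" using degree_preduce_le[of p "f^k"] dfk by simp
    show "2*k \<le> degree (preduce p (f^k))" using lfk dfk p1 by (intro degree_preduce_ge) simp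
  qed
  define B where "B = mred p A"
  have "peval p [:mdet B, - mtr B, 1:] B = mred p (madd (msmul (mdet B) mI) (madd (msmul (- mtr B) B) (imul B B)))"
    by (rule peval_quad)
  also have "madd (msmul (mdet B) mI) (madd (msmul (- mtr B) B) (imul B B)) = mzero"
    by (cases B) (simp add: madd_def msmul_def mI_def imul_def mtr_def mdet_def mzero_def algebra_simps)
  finally have ch: "peval p [:mdet B, - mtr B, 1:] B = mred p mzero" .
  have "lead_coeff [:mdet B, - mtr B, 1:] = 1" by simp
  then have "degree (preduce p (f^k)) \<le> degree [:mdet B, - mtr B, 1:]"
    using mp ch unfolding minpoly_mod_def B_def by blast
  then have k1: "k \<le> 1" using dq by simp
  have k0: "k \<noteq> 0"
  proof
    assume "k = 0"
    then have "peval p 1 B = mred p mzero" using mp preduce_1[OF p1] unfolding minpoly_mod_def B_def by simp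
    then show False using p1 by (simp add: peval_one mred_def mI_def mzero_def)
  qed
  have "k = 1" using k0 k1 by simp
  then have mq: "minpoly_mod p (mred p A) [:a0 mod p, a1 mod p, 1:]"
    using mp p1 by (simp add: f_def preduce_quad)
  have "ns p A \<and> [mtr A = -(a1 mod p)] (mod p) \<and> [mdet A = a0 mod p] (mod p)"
    by (rule minpoly_quad[OF p mq])
  then have nA: "ns p A" and trA: "[mtr A = -(a1 mod p)] (mod p)"
    and detA: "[mdet A = a0 mod p] (mod p)" by auto
  define b0 b1 where "b0 = a0 mod p" "b1 = a1 mod p"
  have rb: "0 \<le> b0" "b0 < p" "0 \<le> b1" "b1 < p" using p1 by (simp_all add: b0_b1_def)
  have cb: "[b0 = a0] (mod p)" "[b1 = a1] (mod p)" by (simp_all add: b0_b1_def cong_def)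
  have nb0: "\<not> p dvd b0" using irr_a0[OF p irr] by (simp add: b0_b1_def dvd_mod_iff)
  have d1: "p dvd mtr A + b1" using trA by (simp add: b0_b1_def cong_iff_dvd_diff)
  define \<alpha> where "\<alpha> = ((mtr A + b1) div p) mod p"
  have pa: "[p*\<alpha> = mtr A + b1] (mod p^2)" unfolding \<alpha>_def by (rule pdiv[OF d1])
  define e where "e = mdet A - b0 + p*\<alpha>*b1"
  have "p dvd (mdet A - b0) + p*(\<alpha>*b1)" using detA by (simp add: b0_b1_def cong_iff_dvd_diff)
  then have de: "p dvd e" by (simp add: e_def algebra_simps)
  have "coprime p b0" by (rule prime_imp_coprime) (use p nb0 in auto)
  then obtain w where w: "[b0*w = 1] (mod p)" using cong_solve_coprime_int by (metis coprime_commute)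
  define \<beta> where "\<beta> = ((e div p) * w) mod p"
  have "[\<beta>*b0 = (e div p) * (b0*w)] (mod p)" by (simp add: \<beta>_def cong_def mod_mult_right_eq algebra_simps)
  also have "[(e div p) * (b0*w) = (e div p) * 1] (mod p)" by (rule cong_mult[OF cong_refl w])
  finally have "[p*(\<beta>*b0) = p*(e div p)] (mod p^2)" using scale_up by simp
  moreover have "p*(e div p) = e" using de by simp
  ultimately have pb: "[p*(\<beta>*b0) = e] (mod p^2)" by simp
  define X :: mat2 where "X = (p*\<alpha>, 1 + p*\<beta>, - b0, - b1)"
  have n1: "\<not> p dvd 1 + p*\<beta>"
  proof
    assume "p dvd 1 + p*\<beta>"
    then have "p dvd (1 + p*\<beta>) - p*\<beta>" by (rule dvd_diff) simp
    then show False using p1 by (auto dest: zdvd_imp_le)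
  qed
  have nX: "ns p X" using n1 by (simp add: X_def ns_def)
  have "[p*\<alpha> - b1 = (mtr A + b1) - b1] (mod p^2)" by (rule cong_diff[OF pa cong_refl])
  then have t: "[mtr X = mtr A] (mod p^2)" by (simp add: X_def mtr_def)
  have "[b0 + p*(\<beta>*b0) - p*\<alpha>*b1 = b0 + e - p*\<alpha>*b1] (mod p^2)"
    by (rule cong_diff[OF cong_add[OF cong_refl pb] cong_refl])
  then have d: "[mdet X = mdet A] (mod p^2)" by (simp add: X_def mdet_def e_def algebra_simps)
  have "sim (p^2) X A" using classify[OF p nX nA t d] .
  then have "sim (p^2) A (mred (p^2) X)" by (rule sim_mc[OF sim_sym]) simp_all
  then have c: "conj2 (p^2) A (mred (p^2) X)" by (rule sim_conj2) (simp_all add: AG)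
  have "\<alpha> \<ge> 0" "\<alpha> < p" "\<beta> \<ge> 0" "\<beta> < p" using p1 by (simp_all add: \<alpha>_def \<beta>_def)
  then have "mred (p^2) X \<in> NF3 p a0 a1" unfolding NF3_def X_def mem_Collect_eq
    using rb cb by (intro exI[of _ b0] exI[of _ b1] exI[of _ \<alpha>] exI[of _ \<beta>]) simp
  then show ?thesis by (rule exu_from[OF _ c part3_unique[OF p irr]])
qed


subsection \<open>Part (i)\<close>

definition isD :: "int \<Rightarrow> mat2 \<Rightarrow> bool" where
  "isD p D \<longleftrightarrow> (\<exists>\<alpha> \<delta>. 0 \<le> \<alpha> \<and> \<alpha> \<le> \<delta> \<and> \<delta> < p \<and> D = (\<alpha>,0,0,\<delta>))"
definition isJ :: "int \<Rightarrow> mat2 \<Rightarrow> bool" where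
  "isJ p D \<longleftrightarrow> (\<exists>\<alpha>. 0 \<le> \<alpha> \<and> \<alpha> < p \<and> D = (\<alpha>,1,0,\<alpha>))"
definition isK :: "int \<Rightarrow> mat2 \<Rightarrow> bool" where
  "isK p D \<longleftrightarrow> (\<exists>b0 b1. 0 \<le> b0 \<and> b0 < p \<and> 0 \<le> b1 \<and> b1 < p \<and> irreducible_mod p [:b0,b1,1:] \<and> D = (0,1,-b0,-b1))"
definition isT :: "int \<Rightarrow> mat2 \<Rightarrow> bool" where
  "isT p D \<longleftrightarrow> isD p D \<or> isJ p D \<or> isK p D"

lemma rdvd: fixes p x y :: int shows "p dvd x - y \<Longrightarrow> 0 \<le> x \<Longrightarrow> x < p \<Longrightarrow> 0 \<le> y \<Longrightarrow> y < p \<Longrightarrow> x = y"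
  using range_eq[of x y p] by (simp add: cong_iff_dvd_diff)

lemma DD: fixes p :: int assumes p: "prime p"
  and r: "0 \<le> a" "a \<le> d" "d < p" "0 \<le> a'" "a' \<le> d'" "d' < p"
  and t: "p dvd (a + d) - (a' + d')" and dt: "p dvd a*d - a'*d'"
  shows "a = a' \<and> d = d'"
proof -
  have "p dvd a*((a + d) - (a' + d')) - (a*d - a'*d')" by (rule dvd_diff[OF dvd_mult[OF t] dt])
  moreover have "a*((a + d) - (a' + d')) - (a*d - a'*d') = (a - a')*(a - d')" by (simp add: algebra_simps)
  ultimately have "p dvd (a - a')*(a - d')" by simp
  then have "p dvd a - a' \<or> p dvd a - d'" using prime_dvd_mult_iff[OF p] by blast
  then show ?thesis
  proof
    assume "p dvd a - a'"
    then have aa: "a = a'" using r by (intro rdvd) auto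
    then have "p dvd d - d'" using t by simp
    then have "d = d'" using r by (intro rdvd) auto
    then show ?thesis using aa by simp
  next
    assume "p dvd a - d'"
    then have ad: "a = d'" using r by (intro rdvd) auto
    then have "p dvd d - a'" using t by (simp add: algebra_simps)
    then have "d = a'" using r by (intro rdvd) auto
    then show ?thesis using ad r by simp
  qed
qed

lemma DJ: fixes p :: int assumes p: "prime p" and ns: "\<not> p dvd a - d"
  and t: "p dvd (a + d) - 2*b" and dt: "p dvd a*d - b*b" shows False
proof -
  have "p dvd (a*d - b*b) - b*((a + d) - 2*b)" by (rule dvd_diff[OF dt dvd_mult[OF t]])
  moreover have "(a*d - b*b) - b*((a + d) - 2*b) = (a - b)*(d - b)" by (simp add: algebra_simps)
  ultimately have "p dvd (a - b)*(d - b)" by simp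
  then have "p dvd a - b \<or> p dvd d - b" using prime_dvd_mult_iff[OF p] by blast
  moreover have "(a - b) - ((a + d) - 2*b) = -(d - b)" by simp
  moreover have "((a + d) - 2*b) - (d - b) = a - b" by simp
  moreover have "(a - b) - (d - b) = a - d" by simp
  ultimately show False using ns t by (metis dvd_diff dvd_minus_iff)
qed

lemma KR: fixes p :: int assumes p: "prime p" and irr: "irreducible_mod p [:b0,b1,1:]"
  and t: "p dvd b1 + t" and d: "p dvd b0 - d" and r: "p dvd r*r - t*r + d" shows False
proof -
  have "p dvd (r*r - t*r + d) + (b1 + t)*r + (b0 - d)" by (rule dvd_add[OF dvd_add[OF r dvd_mult2[OF t]] d])
  moreover have "(r*r - t*r + d) + (b1 + t)*r + (b0 - d) = r*r + b1*r + b0" by (simp add: algebra_simps)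
  ultimately show False using root_reducible[OF p] irr by simp
qed

lemma JJ: fixes p :: int assumes p: "prime p" and r: "0 \<le> b" "b < p" "0 \<le> b'" "b' < p"
  and t: "p dvd 2*b - 2*b'" and dt: "p dvd b*b - b'*b'" shows "b = b'"
proof -
  have "p dvd (b*b - b'*b') - b'*(2*b - 2*b')" by (rule dvd_diff[OF dt dvd_mult[OF t]])
  moreover have "(b*b - b'*b') - b'*(2*b - 2*b') = (b - b')*(b - b')" by (simp add: algebra_simps)
  ultimately have "p dvd (b - b')*(b - b')" by simp
  then have "p dvd b - b'" using prime_dvd_mult_iff[OF p] by blast
  then show ?thesis using r by (intro rdvd) auto
qed

lemma core_ord: fixes p :: int assumes p: "prime p"
  and cases: "(isD p D1 \<and> isT p D2) \<or> (isJ p D1 \<and> (isJ p D2 \<or> isK p D2)) \<or> (isK p D1 \<and> isK p D2)"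
  and t: "p dvd mtr D1 - mtr D2" and d: "p dvd mdet D1 - mdet D2" and n: "ns p D1 \<longleftrightarrow> ns p D2"
  shows "D1 = D2"
proof -
  have nsJ: "\<And>\<alpha>. ns p (\<alpha>,1,0,\<alpha>)" and nsK: "\<And>b0 b1. ns p (0,1,-b0,-b1)"
    using prime_gt_1_int[OF p] by (auto simp: ns_def dest: zdvd_imp_le)
  have nsD: "\<And>a d. ns p (a,0,0,d) \<longleftrightarrow> \<not> p dvd a - d" by (simp add: ns_def)
  from cases consider (a) "isD p D1" "isT p D2" | (b) "isJ p D1" "isJ p D2 \<or> isK p D2"
    | (c) "isK p D1" "isK p D2" by blast
  then show ?thesis
  proof cases
    case a
    then obtain a d where r1: "0 \<le> a" "a \<le> d" "d < p" and D1: "D1 = (a,0,0,d)" unfolding isD_def by blast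
    from \<open>isT p D2\<close> show ?thesis unfolding isT_def
    proof (elim disjE)
      assume "isD p D2"
      then obtain a' d' where r2: "0 \<le> a'" "a' \<le> d'" "d' < p" and D2: "D2 = (a',0,0,d')" unfolding isD_def by blast
      have "a = a' \<and> d = d'" using t d by (intro DD[OF p r1 r2]) (simp_all add: D1 D2 mtr_def mdet_def)
      then show ?thesis by (simp add: D1 D2)
    next
      assume "isJ p D2"
      then obtain b where D2: "D2 = (b,1,0,b)" unfolding isJ_def by blast
      have "\<not> p dvd a - d" using n nsJ nsD D1 D2 by simp
      then show ?thesis using DJ[OF p] t d by (simp add: D1 D2 mtr_def mdet_def)
    next
      assume "isK p D2"
      then obtain b0 b1 where irr: "irreducible_mod p [:b0,b1,1:]" and D2: "D2 = (0,1,-b0,-b1)"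
        unfolding isK_def by blast
      have "a*a - (a+d)*a + a*d = 0" by (simp add: algebra_simps)
      then have "p dvd a*a - (a+d)*a + a*d" by simp
      then show ?thesis using KR[OF p irr, of "a+d" "a*d" a] t d
        by (simp add: D1 D2 mtr_def mdet_def dvd_diff_commute algebra_simps)
    qed
  next
    case b
    then obtain b where r1: "0 \<le> b" "b < p" and D1: "D1 = (b,1,0,b)" unfolding isJ_def by blast
    from \<open>isJ p D2 \<or> isK p D2\<close> show ?thesis
    proof
      assume "isJ p D2"
      then obtain b' where r2: "0 \<le> b'" "b' < p" and D2: "D2 = (b',1,0,b')" unfolding isJ_def by blast
      have "b = b'" using t d by (intro JJ[OF p r1 r2]) (simp_all add: D1 D2 mtr_def mdet_def algebra_simps)
      then show ?thesis by (simp add: D1 D2)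
    next
      assume "isK p D2"
      then obtain b0 b1 where irr: "irreducible_mod p [:b0,b1,1:]" and D2: "D2 = (0,1,-b0,-b1)"
        unfolding isK_def by blast
      have "b*b - (2*b)*b + b*b = 0" by (simp add: algebra_simps)
      then have "p dvd b*b - (2*b)*b + b*b" by simp
      then show ?thesis using KR[OF p irr, of "2*b" "b*b" b] t d
        by (simp add: D1 D2 mtr_def mdet_def dvd_diff_commute algebra_simps)
    qed
  next
    case c
    then obtain b0 b1 c0 c1 where r: "0 \<le> b0" "b0 < p" "0 \<le> b1" "b1 < p" "0 \<le> c0" "c0 < p" "0 \<le> c1" "c1 < p"
      and D1: "D1 = (0,1,-b0,-b1)" and D2: "D2 = (0,1,-c0,-c1)" unfolding isK_def by blast
    have "p dvd b1 - c1" using t by (simp add: D1 D2 mtr_def dvd_diff_commute algebra_simps)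
    then have "b1 = c1" using r by (intro rdvd) auto
    moreover have "p dvd b0 - c0" using d by (simp add: D1 D2 mdet_def)
    then have "b0 = c0" using r by (intro rdvd) auto
    ultimately show ?thesis by (simp add: D1 D2)
  qed
qed

lemma core_unique: fixes p :: int assumes p: "prime p" and T: "isT p D1" "isT p D2" and s: "sim p D1 D2"
  shows "D1 = D2"
proof -
  have t: "p dvd mtr D1 - mtr D2" and d: "p dvd mdet D1 - mdet D2"
    using sim_inv[OF s] by (simp_all add: cong_iff_dvd_diff)
  have t': "p dvd mtr D2 - mtr D1" and d': "p dvd mdet D2 - mdet D1"
    using t d by (simp_all add: dvd_diff_commute)
  have n: "ns p D1 \<longleftrightarrow> ns p D2" using sim_scal[OF s] sim_scal[OF sim_sym[OF s]] by blast
  have "((isD p D1 \<and> isT p D2) \<or> (isJ p D1 \<and> (isJ p D2 \<or> isK p D2)) \<or> (isK p D1 \<and> isK p D2))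
     \<or> ((isD p D2 \<and> isT p D1) \<or> (isJ p D2 \<and> (isJ p D1 \<or> isK p D1)) \<or> (isK p D2 \<and> isK p D1))"
    using T unfolding isT_def by blast
  then show ?thesis
  proof
    assume "(isD p D1 \<and> isT p D2) \<or> (isJ p D1 \<and> (isJ p D2 \<or> isK p D2)) \<or> (isK p D1 \<and> isK p D2)"
    then show ?thesis using core_ord[OF p _ t d n] by blast
  next
    assume "(isD p D2 \<and> isT p D1) \<or> (isJ p D2 \<and> (isJ p D1 \<or> isK p D1)) \<or> (isK p D2 \<and> isK p D1)"
    then show ?thesis using core_ord[OF p _ t' d' n[symmetric]] by simp
  qed
qed


lemma sim_p: fixes p :: int assumes p: "prime p" and "ns p C" "ns p D"
  and "[mtr D = mtr C] (mod p)" "[mdet D = mdet C] (mod p)" shows "sim p C D"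
  using classify[OF p assms(2,3), of 1] assms(4,5) by (simp add: cong_sym)

lemma core_exists: fixes p :: int assumes p: "prime p" shows "\<exists>D. isT p D \<and> sim p C D"
proof -
  have p1: "p > 1" using prime_gt_1_int[OF p] .
  have n1: "\<not> p dvd 1" using p1 by (auto dest: zdvd_imp_le)
  show ?thesis
  proof (cases "ns p C")
    case False
    define \<alpha> where "\<alpha> = fst C mod p"
    have "mc p C (msmul (fst C) mI)" using False scal_iff by blast
    moreover have "mc p (msmul (fst C) mI) (\<alpha>,0,0,\<alpha>)" by (simp add: \<alpha>_def mc_iff msmul_def mI_def cong_def)
    ultimately have "sim p C (\<alpha>,0,0,\<alpha>)" by (intro mc_sim) (rule mc_trans)
    moreover have "isD p (\<alpha>,0,0,\<alpha>)" unfolding isD_def using p1 by (auto simp: \<alpha>_def)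
    ultimately show ?thesis unfolding isT_def by blast
  next
    case nC: True
    define t d where "t = mtr C" "d = mdet C"
    show ?thesis
    proof (cases "\<exists>r. p dvd r*r - t*r + d")
      case True
      then obtain r where r: "p dvd r*r - t*r + d" by blast
      define r0 s0 where "r0 = r mod p" "s0 = (t - r) mod p"
      have rr: "0 \<le> r0" "r0 < p" "0 \<le> s0" "s0 < p" using p1 by (simp_all add: r0_s0_def)
      have ts: "[r0 + s0 = t] (mod p)"
      proof -
        have "[r0 + s0 = r + (t - r)] (mod p)" unfolding r0_s0_def by (intro cong_add) (simp_all add: cong_def)
        then show ?thesis by simp
      qed
      have ds: "[r0 * s0 = d] (mod p)"
      proof -
        have "[r0 * s0 = r * (t - r)] (mod p)" unfolding r0_s0_def by (intro cong_mult) (simp_all add: cong_def)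
        moreover have "[r * (t - r) = d] (mod p)"
        proof -
          have e: "r * (t - r) - d = -(r*r - t*r + d)" by (simp add: algebra_simps)
          show ?thesis unfolding cong_iff_dvd_diff e dvd_minus_iff by (rule r)
        qed
        ultimately show ?thesis by (rule cong_trans)
      qed
      show ?thesis
      proof (cases "r0 = s0")
        case False
        define \<alpha> \<delta> where "\<alpha> = min r0 s0" "\<delta> = max r0 s0"
        have ad: "\<alpha> + \<delta> = r0 + s0" "\<alpha> * \<delta> = r0 * s0" unfolding \<alpha>_\<delta>_def by (auto simp: min_def max_def)
        have nD: "ns p (\<alpha>,0,0,\<delta>)"
        proof -
          have "\<not> p dvd \<alpha> - \<delta>"
          proof
            assume "p dvd \<alpha> - \<delta>"
            then have "\<alpha> = \<delta>" using rr unfolding \<alpha>_\<delta>_def by (intro rdvd) (auto simp: min_def max_def)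
            then show False using False unfolding \<alpha>_\<delta>_def by (auto simp: min_def max_def split: if_splits)
          qed
          then show ?thesis by (simp add: ns_def)
        qed
        have "sim p C (\<alpha>,0,0,\<delta>)"
          using nC nD ts ds ad by (intro sim_p[OF p]) (simp_all add: mtr_def mdet_def t_d_def)
        moreover have "isD p (\<alpha>,0,0,\<delta>)" unfolding isD_def \<alpha>_\<delta>_def using rr by auto
        ultimately show ?thesis unfolding isT_def by blast
      next
        case True
        have nD: "ns p (r0,1,0,r0)" using n1 by (simp add: ns_def)
        have "sim p C (r0,1,0,r0)"
          using nC nD ts ds True by (intro sim_p[OF p]) (simp_all add: mtr_def mdet_def t_d_def)
        moreover have "isJ p (r0,1,0,r0)" unfolding isJ_def using rr by auto
        ultimately show ?thesis unfolding isT_def by blast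
      qed
    next
      case False
      define b0 b1 where "b0 = d mod p" "b1 = (-t) mod p"
      have rb: "0 \<le> b0" "b0 < p" "0 \<le> b1" "b1 < p" using p1 by (simp_all add: b0_b1_def)
      have db1: "p dvd b1 + t" 
      proof -
        have "[b1 = -t] (mod p)" by (simp add: b0_b1_def cong_def)
        then show ?thesis by (simp add: cong_iff_dvd_diff)
      qed
      have db0: "p dvd b0 - d"
      proof -
        have "[b0 = d] (mod p)" by (simp add: b0_b1_def cong_def)
        then show ?thesis by (simp add: cong_iff_dvd_diff)
      qed
      have nr: "\<forall>x. \<not> p dvd (x*x + b1*x + b0)"
      proof (intro allI notI)
        fix x assume h: "p dvd (x*x + b1*x + b0)"
        have "p dvd (x*x + b1*x + b0) - ((b1 + t)*x + (b0 - d))"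
          by (rule dvd_diff[OF h dvd_add[OF dvd_mult2[OF db1] db0]])
        moreover have "(x*x + b1*x + b0) - ((b1 + t)*x + (b0 - d)) = x*x - t*x + d" by (simp add: algebra_simps)
        ultimately show False using False by auto
      qed
      have irr: "irreducible_mod p [:b0,b1,1:]" by (rule noroot_irr[OF p nr])
      have nD: "ns p (0,1,-b0,-b1)" using n1 by (simp add: ns_def)
      have e: "- b1 - t = -(b1 + t)" by simp
      have "[- b1 = t] (mod p)" unfolding cong_iff_dvd_diff e dvd_minus_iff by (rule db1)
      moreover have "[b0 = d] (mod p)" using db0 by (simp add: cong_iff_dvd_diff)
      ultimately have "sim p C (0,1,-b0,-b1)"
        using nC nD by (intro sim_p[OF p]) (simp_all add: mtr_def mdet_def t_d_def)
      moreover have "isK p (0,1,-b0,-b1)" unfolding isK_def using rb irr by blast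
      ultimately show ?thesis unfolding isT_def by blast
    qed
  qed
qed

lemma L_eq: "L p b (x1,x2,x3,x4) = (b + p*x1, p*x2, p*x3, b + p*x4)"
  by (simp add: L_def madd_def msmul_def mI_def)

lemma NF1_of: assumes "0 < b" "b < p" "[b = a] (mod p)" "isT p D"
  shows "mred (p^2) (L p b D) \<in> NF1 p a"
  using assms(4) unfolding isT_def
proof (elim disjE)
  assume "isD p D"
  then obtain \<alpha> \<delta> where "0 \<le> \<alpha>" "\<alpha> \<le> \<delta>" "\<delta> < p" "D = (\<alpha>,0,0,\<delta>)" unfolding isD_def by blast
  then show ?thesis unfolding NF1_def using assms(1-3) by (intro UnI1 CollectI) (auto simp: L_eq)
next
  assume "isJ p D"
  then obtain \<alpha> where "0 \<le> \<alpha>" "\<alpha> < p" "D = (\<alpha>,1,0,\<alpha>)" unfolding isJ_def by blast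
  then show ?thesis unfolding NF1_def using assms(1-3) by (intro UnI1 UnI2 CollectI) (auto simp: L_eq)
next
  assume "isK p D"
  then obtain b0 b1 where "0 \<le> b0" "b0 < p" "0 \<le> b1" "b1 < p" "irreducible_mod p [:b0,b1,1:]"
     "D = (0,1,-b0,-b1)" unfolding isK_def by blast
  then show ?thesis unfolding NF1_def using assms(1-3) by (intro UnI2 CollectI) (auto simp: L_eq)
qed


lemma NF1_to: assumes "N \<in> NF1 p a"
  shows "\<exists>b D. 0 < b \<and> b < p \<and> [b = a] (mod p) \<and> isT p D \<and> N = mred (p^2) (L p b D)"
  using assms unfolding NF1_def
proof (elim UnE)
  assume "N \<in> {N. \<exists>b \<alpha> \<delta>. 0 < b \<and> b < p \<and> [b = a] (mod p) \<and> 0 \<le> \<alpha> \<and> \<alpha> \<le> \<delta> \<and> \<delta> < p \<and>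
          N = mred (p^2) (b + p*\<alpha>, 0, 0, b + p*\<delta>)}"
  then obtain b \<alpha> \<delta> where h: "0 < b" "b < p" "[b = a] (mod p)" "0 \<le> \<alpha>" "\<alpha> \<le> \<delta>" "\<delta> < p"
    "N = mred (p^2) (b + p*\<alpha>, 0, 0, b + p*\<delta>)" by blast
  have "isT p (\<alpha>,0,0,\<delta>)" unfolding isT_def isD_def using h by blast
  then show ?thesis using h by (intro exI[of _ b] exI[of _ "(\<alpha>,0,0,\<delta>)"]) (simp add: L_eq)
next
  assume "N \<in> {N. \<exists>b \<alpha>. 0 < b \<and> b < p \<and> [b = a] (mod p) \<and> 0 \<le> \<alpha> \<and> \<alpha> < p \<and>
          N = mred (p^2) (b + p*\<alpha>, p, 0, b + p*\<alpha>)}"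
  then obtain b \<alpha> where h: "0 < b" "b < p" "[b = a] (mod p)" "0 \<le> \<alpha>" "\<alpha> < p"
    "N = mred (p^2) (b + p*\<alpha>, p, 0, b + p*\<alpha>)" by blast
  have "isT p (\<alpha>,1,0,\<alpha>)" unfolding isT_def isJ_def using h by blast
  then show ?thesis using h by (intro exI[of _ b] exI[of _ "(\<alpha>,1,0,\<alpha>)"]) (simp add: L_eq)
next
  assume "N \<in> {N. \<exists>b b0 b1. 0 < b \<and> b < p \<and> [b = a] (mod p) \<and> 0 \<le> b0 \<and> b0 < p \<and> 0 \<le> b1 \<and> b1 < p \<and>
          irreducible_mod p [:b0, b1, 1:] \<and>
          N = mred (p^2) (b, p, - p*b0, b - p*b1)}"
  then obtain b b0 b1 where h: "0 < b" "b < p" "[b = a] (mod p)" "0 \<le> b0" "b0 < p" "0 \<le> b1" "b1 < p"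
    "irreducible_mod p [:b0, b1, 1:]" "N = mred (p^2) (b, p, - p*b0, b - p*b1)" by blast
  have "isT p (0,1,-b0,-b1)" unfolding isT_def isK_def using h by blast
  then show ?thesis using h by (intro exI[of _ b] exI[of _ "(0,1,-b0,-b1)"]) (simp add: L_eq)
qed

lemma part1_unique: fixes p a :: int assumes p: "prime p"
  shows "N1 \<in> NF1 p a \<Longrightarrow> N2 \<in> NF1 p a \<Longrightarrow> sim (p^2) N1 N2 \<Longrightarrow> N1 = N2"
proof -
  assume h1: "N1 \<in> NF1 p a" and h2: "N2 \<in> NF1 p a" and s: "sim (p^2) N1 N2"
  obtain b1 D1 where r1: "0 < b1" "b1 < p" "[b1 = a] (mod p)" "isT p D1" and N1: "N1 = mred (p^2) (L p b1 D1)"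
    using NF1_to[OF h1] by blast
  obtain b2 D2 where r2: "0 < b2" "b2 < p" "[b2 = a] (mod p)" "isT p D2" and N2: "N2 = mred (p^2) (L p b2 D2)"
    using NF1_to[OF h2] by blast
  have p0: "p \<noteq> 0" using p by auto
  have b: "b1 = b2" using r1 r2 by (intro range_eq[of _ _ p]) (auto intro: cong_trans cong_sym)
  have "sim (p^2) (L p b1 D1) (L p b1 D2)" using sim_mc[OF s] N1 N2 b by simp
  then have "sim p D1 D2" by (rule unlift[OF _ p0])
  then have "D1 = D2" using core_unique[OF p r1(4) r2(4)] by blast
  then show "N1 = N2" using N1 N2 b by simp
qed

lemma part1: fixes p a :: int assumes p: "prime p" and na: "\<not> p dvd a" and A: "A \<in> GL11 p a"
  shows "\<exists>!N. N \<in> NF1 p a \<and> conj2 (p^2) A N"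
proof -
  have p1: "p > 1" using prime_gt_1_int[OF p] .
  have AG: "mred (p^2) A = A" and Ar: "mred p A = mred p (msmul a mI)"
    using A by (auto simp: GL11_def GL2_def)
  obtain x1 x2 x3 x4 where Ae: "A = (x1,x2,x3,x4)" by (cases A)
  define b where "b = a mod p"
  have b0: "0 \<le> b" "b < p" using p1 by (simp_all add: b_def)
  have bn0: "b \<noteq> 0" using na by (simp add: b_def dvd_eq_mod_eq_0)
  have ba: "[b = a] (mod p)" by (simp add: b_def cong_def)
  have c: "[x1 = a] (mod p)" "[x2 = 0] (mod p)" "[x3 = 0] (mod p)" "[x4 = a] (mod p)"
    using Ar by (simp_all add: Ae mred_def msmul_def mI_def cong_def)
  have d1: "p dvd x1 - b" using cong_trans[OF c(1) cong_sym[OF ba]] by (simp add: cong_iff_dvd_diff)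
  have d4: "p dvd x4 - b" using cong_trans[OF c(4) cong_sym[OF ba]] by (simp add: cong_iff_dvd_diff)
  have d2: "p dvd x2" and d3: "p dvd x3" using c by (simp_all add: cong_0_iff)
  define C where "C = ((x1 - b) div p, x2 div p, x3 div p, (x4 - b) div p)"
  have AL: "A = L p b C" using d1 d2 d3 d4 by (simp add: C_def L_eq Ae dvd_mult_div_cancel)
  obtain D where T: "isT p D" and sCD: "sim p C D" using core_exists[OF p] by blast
  have "sim (p^2) A (L p b D)" unfolding AL by (rule lift[OF sCD]) (use p1 in simp)
  then have "sim (p^2) A (mred (p^2) (L p b D))" by (rule sim_mc) simp_all
  then have cj: "conj2 (p^2) A (mred (p^2) (L p b D))" by (rule sim_conj2) (simp_all add: AG)
  have "mred (p^2) (L p b D) \<in> NF1 p a" using b0 bn0 ba T by (intro NF1_of) auto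
  then show ?thesis by (rule exu_from[OF _ cj part1_unique[OF p]])
qed

theorem theorem3p2:
  fixes p :: int
  assumes "prime p"
  shows "(\<forall>a. \<not> p dvd a \<longrightarrow> (\<forall>A\<in>GL11 p a. \<exists>!N. N \<in> NF1 p a \<and> conj2 (p^2) A N))
       \<and> (\<forall>a. \<not> p dvd a \<longrightarrow> (\<forall>A\<in>GLtwo p a. \<exists>!N. N \<in> NF2 p a \<and> conj2 (p^2) A N))
       \<and> (\<forall>a0 a1. irreducible_mod p [:a0, a1, 1:] \<longrightarrow>
            (\<forall>A\<in>GLf p [:a0, a1, 1:]. \<exists>!N. N \<in> NF3 p a0 a1 \<and> conj2 (p^2) A N))"
  using part1[OF assms] part2[OF assms] part3[OF assms] by blast

end
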